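(* There exists a constant $C<\infty$ such that $\beta_\alpha<C$ for every $\alpha\in(1,2]$.
   Context: For $\alpha\in(1,2]$, $\beta_\alpha$ denotes the $\mathbb P$-a.s. Hausdorff dimension of the harmonic measure $\mu_\alpha$ on the boundary of the reduced stable tree $\Delta^{(\alpha)}$ (equivalently the a.s. constant value of $\lim_{r\downarrow0}\log\mu_\alpha(\mathcal B_{\mathbf d}(x,r))/\log r$ for $\mu_\alpha$-a.e. $x$). It is given by $$\beta_\alpha=\frac12\bigg(\frac{\big(\int\gamma_\alpha(\mathrm ds)\,s\big)^2}{\iint\gamma_\alpha(\mathrm ds)\gamma_\alpha(\mathrm dt)\frac{st}{s+t-1}}-1\bigg),$$ where $\gamma_\alpha$ is the law of the conductance $\mathcal C^{(\alpha)}$. Definitions: $\theta_2=\delta_2$; for $\alpha\in(1,2)$, $\theta_\alpha(0)=\theta_\alpha(1)=0$, $\theta_\alpha(k)=\frac{\alpha\Gamma(k-\alpha)}{k!\Gamma(2-\alpha)}$ for $k\ge2$. $\Delta^{(\alpha)}$ is the compact $\mathbb R$-tree obtained as follows: a root segment of length $U_\varnothing$ (uniform on $[0,1]$); at its top, $K_\varnothing\sim\theta_\alpha$ new segments are attached whose lengths are, conditionally, i.i.d. uniform on $[0,1-U_\varnothing]$; recursively each segment ending at height $h<1$ branches into an independent $\theta_\alpha$-distributed number of segments with i.i.d. lengths uniform on $[0,1-h]$; $\Delta^{(\alpha)}$ is the completion, with intrinsic metric $\mathbf d$ and boundary $\partial\Delta^{(\alpha)}$ the set of points at height $1$. $\mathcal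 C^{(\alpha)}$ is the effective conductance between the root and $\partial\Delta^{(\alpha)}$ when $\Delta^{(\alpha)}$ is viewed as an electrical network with unit resistance per unit length; $\mathcal C^{(\alpha)}\ge1$. $\mu_\alpha$ is the hitting distribution on $\partial\Delta^{(\alpha)}$ of Brownian motion on $\Delta^{(\alpha)}$ started at the root (linear Brownian motion on segments, reflected at the root, choosing each adjacent segment with equal probability at branching points). *)

theory Defs
  imports "HOL-Probability.Probability"
begin

definition theta :: "real \<Rightarrow> nat \<Rightarrow> real" where
  "theta \<alpha> k = (if \<alpha> = 2 then (if k = 2 then 1 else 0)
     else if k < 2 then 0
     else \<alpha> * Gamma (real k - \<alpha>) / (fact k * Gamma (2 - \<alpha>)))"

definition theta_measure :: "real \<Rightarrow> nat measure" where
  "theta_measure \<alpha> = density (count_space UNIV) (\<lambda>k. ennreal (theta \<alpha> k))"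

text \<open>Vertices (segments) are Ulam-Harris words: [] is the root segment, u @ [i]
  (i < K u) are the children of u. Each segment u carries an independent
  Y u uniform on [0,1] and an independent K u with law theta_alpha.
  If the bottom of segment u is at height h, its length is (1 - h) * Y u, i.e.
  uniform on [0, 1 - h] conditionally on the past.\<close>

text \<open>remaining height 1 - h above the top of segment u, given the path from the root\<close>
fun rem_above :: "(nat list \<Rightarrow> real) \<Rightarrow> nat list \<Rightarrow> nat list \<Rightarrow> real" where
  "rem_above Y v [] = 1 - Y v"
| "rem_above Y v (i # w) = (1 - Y v) * rem_above Y (v @ [i]) w"

definition rem_below :: "(nat list \<Rightarrow> real) \<Rightarrow> nat list \<Rightarrow> real" where
  "rem_below Y u = (if u = [] then 1 else rem_above Y [] (butlast u))"

definition seg_len :: "(nat list \<Rightarrow> real) \<Rightarrow> nat list \<Rightarrow> real" where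
  "seg_len Y u = rem_below Y u * Y u"

text \<open>Effective conductance between the bottom of segment u and the boundary of the
  subtree of generation n below it, when the tops of all segments n generations
  below u are shorted to the boundary (unit resistance per unit length).\<close>
fun cond_trunc :: "nat \<Rightarrow> (nat list \<Rightarrow> real) \<Rightarrow> (nat list \<Rightarrow> nat) \<Rightarrow> nat list \<Rightarrow> real" where
  "cond_trunc 0 Y K u = 1 / seg_len Y u"
| "cond_trunc (Suc n) Y K u =
     1 / (seg_len Y u + 1 / (\<Sum>i<K u. cond_trunc n Y K (u @ [i])))"

text \<open>Effective conductance between root and the boundary of the tree (limit of
  the decreasing truncated conductances).\<close>
definition conductance :: "(nat list \<Rightarrow> real \<times> nat) \<Rightarrow> real" where
  "conductance \<omega> = lim (\<lambda>n. cond_trunc n (\<lambda>u. fst (\<omega> u)) (\<lambda>u. snd (\<omega> u)) [])"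

definition tree_space :: "real \<Rightarrow> (nat list \<Rightarrow> real \<times> nat) measure" where
  "tree_space \<alpha> = PiM UNIV (\<lambda>_. uniform_measure lborel {0..1} \<Otimes>\<^sub>M theta_measure \<alpha>)"

definition gamma_law :: "real \<Rightarrow> real measure" where
  "gamma_law \<alpha> = distr (tree_space \<alpha>) borel conductance"

definition beta :: "real \<Rightarrow> real" where
  "beta \<alpha> = ((( \<integral>s. s \<partial>gamma_law \<alpha>) ^ 2
      / (\<integral>s. (\<integral>t. s * t / (s + t - 1) \<partial>gamma_law \<alpha>) \<partial>gamma_law \<alpha>)) - 1) / 2"

end

theory Submission
  imports Defs
begin

definition aseq :: "real \<Rightarrow> nat \<Rightarrow> real" where
  "aseq \<alpha> k = Gamma (real k + 1 - \<alpha>) / (fact k * Gamma (2 - \<alpha>))"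

lemma aseq_rec:
  assumes "1 < \<alpha>" "\<alpha> < 2" "k \<ge> 1"
  shows "aseq \<alpha> (Suc k) = aseq \<alpha> k * (real (Suc k) - \<alpha>) / real (Suc k)"
proof -
  have ni: "real k + 1 - \<alpha> \<notin> \<int>\<^sub>\<le>\<^sub>0"
  proof
    assume h: "real k + 1 - \<alpha> \<in> \<int>\<^sub>\<le>\<^sub>0"
    have "real k + 1 - \<alpha> \<le> 0" by (rule nonpos_Ints_nonpos[OF h])
    moreover have "real k \<ge> 1" using assms by simp
    ultimately show False using assms by linarith
  qed
  have eq: "real (Suc k) + 1 - \<alpha> = (real k + 1 - \<alpha>) + 1" by simp
  have "Gamma (real (Suc k) + 1 - \<alpha>) = (real k + 1 - \<alpha>) * Gamma (real k + 1 - \<alpha>)"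
    unfolding eq by (rule Gamma_plus1[OF ni])
  moreover have "Gamma (2 - \<alpha>) > 0" using assms by (intro Gamma_real_pos) simp
  ultimately show ?thesis unfolding aseq_def
    by (simp add: field_simps fact_Suc)
qed

lemma aseq_one: assumes "\<alpha> < 2" shows "aseq \<alpha> 1 = 1"
proof -
  have "Gamma (2 - \<alpha>) > 0" using assms by (intro Gamma_real_pos) simp
  then show ?thesis unfolding aseq_def by (simp add: add_ac)
qed

lemma aseq_bounds:
  assumes "1 < \<alpha>" "\<alpha> < 2" "k \<ge> 1"
  shows "0 < aseq \<alpha> k \<and> aseq \<alpha> k \<le> 1 / real k"
  using assms(3)
proof (induction k rule: dec_induct)
  case base then show ?case using aseq_one[OF assms(2)] by simp
next
  case (step k)
  have r: "aseq \<alpha> (Suc k) = aseq \<alpha> k * (real (Suc k) - \<alpha>) / real (Suc k)"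
    by (rule aseq_rec[OF assms(1,2) step(1)])
  have k1: "real k \<ge> 1" using step by simp
  have pos: "0 < aseq \<alpha> k * (real (Suc k) - \<alpha>) / real (Suc k)"
    using step assms by (intro divide_pos_pos mult_pos_pos) auto
  have "aseq \<alpha> k * (real (Suc k) - \<alpha>) \<le> (1 / real k) * real k"
    using step assms k1 by (intro mult_mono) auto
  then have "aseq \<alpha> k * (real (Suc k) - \<alpha>) / real (Suc k) \<le> 1 / real (Suc k)"
    using k1 by (simp add: divide_right_mono)
  with pos r show ?case by simp
qed

lemma theta_eq:
  assumes "1 < \<alpha>" "\<alpha> < 2" "k \<ge> 2"
  shows "theta \<alpha> k = \<alpha> / real k * aseq \<alpha> (k - 1)"
    and "theta \<alpha> k = aseq \<alpha> (k - 1) - aseq \<alpha> k"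
proof -
  obtain j where j: "k = Suc j" "j \<ge> 1" using assms(3) by (cases k) auto
  have "Gamma (2 - \<alpha>) > 0" using assms by (intro Gamma_real_pos) simp
  then show 1: "theta \<alpha> k = \<alpha> / real k * aseq \<alpha> (k - 1)"
    using assms j unfolding theta_def aseq_def by (simp add: fact_Suc field_simps)
  have "aseq \<alpha> k = aseq \<alpha> j * (real (Suc j) - \<alpha>) / real (Suc j)"
    using aseq_rec[OF assms(1,2) j(2)] j by simp
  moreover have "real (Suc j) > 0" by simp
  ultimately have "aseq \<alpha> (k - 1) - aseq \<alpha> k = aseq \<alpha> j * (\<alpha> / real (Suc j))"
    using j by (simp add: field_simps)
  then show "theta \<alpha> k = aseq \<alpha> (k - 1) - aseq \<alpha> k"
    using 1 j by simp
qed

lemma theta_nonneg: assumes "1 < \<alpha>" "\<alpha> \<le> 2" shows "theta \<alpha> k \<ge> 0"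
proof (cases "\<alpha> = 2 \<or> k < 2")
  case True then show ?thesis unfolding theta_def by auto
next
  case False
  then have k: "k \<ge> 2" "\<alpha> < 2" using assms by auto
  have "0 < aseq \<alpha> (k-1)" using aseq_bounds[of \<alpha> "k-1"] assms k by auto
  then show ?thesis using theta_eq(1)[of \<alpha> k] assms k by simp
qed

lemma theta_le: assumes "1 < \<alpha>" "\<alpha> \<le> 2" "k \<ge> 2"
  shows "theta \<alpha> k \<le> 2 / (real k * (real k - 1))"
proof (cases "\<alpha> = 2")
  case True then show ?thesis unfolding theta_def using assms by (auto simp: field_simps)
next
  case False
  then have a2: "\<alpha> < 2" using assms by simp
  have b: "0 < aseq \<alpha> (k-1) \<and> aseq \<alpha> (k-1) \<le> 1 / real (k - 1)" using aseq_bounds[OF assms(1) a2, of "k-1"] assms by simp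
  have kk: "real (k - 1) = real k - 1" using assms by simp
  have "theta \<alpha> k = \<alpha> / real k * aseq \<alpha> (k - 1)" using theta_eq(1)[OF assms(1) a2 assms(3)] .
  also have "\<dots> \<le> 2 / real k * (1 / (real k - 1))"
    using b kk assms by (intro mult_mono divide_right_mono) auto
  finally show ?thesis by simp
qed

lemma theta_small: "k < 2 \<Longrightarrow> theta \<alpha> k = 0"
  unfolding theta_def by auto

lemma theta_sums: assumes "1 < \<alpha>" "\<alpha> \<le> 2" shows "(\<lambda>k. theta \<alpha> k) sums 1"
proof (cases "\<alpha> = 2")
  case True
  have "(\<lambda>k. theta \<alpha> k) = (\<lambda>k. if k = 2 then 1 else 0)" using True unfolding theta_def by auto
  then show ?thesis using sums_single[of 2 "\<lambda>_. 1::real"] by simp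
next
  case False
  then have a2: "\<alpha> < 2" using assms by simp
  have ps: "(\<Sum>k<Suc (Suc n). theta \<alpha> k) = 1 - aseq \<alpha> (Suc n)" for n
  proof (induction n)
    case 0 then show ?case using aseq_one[OF a2] by (simp add: theta_small)
  next
    case (Suc n)
    have "theta \<alpha> (Suc (Suc n)) = aseq \<alpha> (Suc n) - aseq \<alpha> (Suc (Suc n))"
      using theta_eq(2)[OF assms(1) a2, of "Suc (Suc n)"] by simp
    moreover have "(\<Sum>k<Suc (Suc (Suc n)). theta \<alpha> k) = (\<Sum>k<Suc (Suc n). theta \<alpha> k) + theta \<alpha> (Suc (Suc n))"
      by (rule sum.lessThan_Suc)
    ultimately show ?case using Suc by simp
  qed
  have lim0: "(\<lambda>n. aseq \<alpha> (Suc n)) \<longlonglongrightarrow> 0"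
  proof (rule real_tendsto_sandwich[of "\<lambda>_. 0" _ _ "\<lambda>n. 1 / real (Suc n)"])
    have "0 \<le> aseq \<alpha> (Suc n)" for n using aseq_bounds[OF assms(1) a2, of "Suc n"] by simp
    then show "\<forall>\<^sub>F n in sequentially. 0 \<le> aseq \<alpha> (Suc n)" by simp
    have "aseq \<alpha> (Suc n) \<le> 1 / real (Suc n)" for n using aseq_bounds[OF assms(1) a2, of "Suc n"] by simp
    then show "\<forall>\<^sub>F n in sequentially. aseq \<alpha> (Suc n) \<le> 1 / real (Suc n)" by simp
    show "(\<lambda>n. 1 / real (Suc n)) \<longlonglongrightarrow> 0" by (rule LIMSEQ_inverse_real_of_nat[unfolded inverse_eq_divide])
  qed simp
  have "(\<lambda>n. \<Sum>k<Suc (Suc n). theta \<alpha> k) \<longlonglongrightarrow> 1"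
    unfolding ps using tendsto_diff[OF tendsto_const lim0, of 1] by simp
  then have "(\<lambda>n. \<Sum>k<n. theta \<alpha> k) \<longlonglongrightarrow> 1"
    using LIMSEQ_imp_Suc[of "\<lambda>n. \<Sum>k<n. theta \<alpha> k"] LIMSEQ_imp_Suc[of "\<lambda>n. \<Sum>k<Suc n. theta \<alpha> k"]
    by blast
  then show ?thesis unfolding sums_def .
qed

lemma prob_theta: assumes "1 < \<alpha>" "\<alpha> \<le> 2" shows "prob_space (theta_measure \<alpha>)"
proof (rule prob_spaceI)
  have sp: "space (theta_measure \<alpha>) = UNIV" unfolding theta_measure_def by simp
  have "emeasure (theta_measure \<alpha>) UNIV = (\<integral>\<^sup>+ k. ennreal (theta \<alpha> k) * indicator UNIV k \<partial>count_space UNIV)"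
    unfolding theta_measure_def by (rule emeasure_density) auto
  also have "\<dots> = (\<integral>\<^sup>+ k. ennreal (theta \<alpha> k) \<partial>count_space UNIV)"
    by (intro nn_integral_cong) simp
  also have "\<dots> = (\<Sum>k. ennreal (theta \<alpha> k))" by (rule nn_integral_count_space_nat)
  also have "\<dots> = ennreal (\<Sum>k. theta \<alpha> k)"
    by (rule suminf_ennreal2) (use theta_nonneg[OF assms] theta_sums[OF assms] sums_summable in auto)
  also have "(\<Sum>k. theta \<alpha> k) = 1" using theta_sums[OF assms] by (rule sums_unique[symmetric])
  finally show "emeasure (theta_measure \<alpha>) (space (theta_measure \<alpha>)) = 1" using sp by simp
qed

lemma prob_U: "prob_space (uniform_measure lborel {0..1::real})"
  by (intro prob_space_uniform_measure) auto

definition M0 :: "real \<Rightarrow> (real \<times> nat) measure" where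
  "M0 \<alpha> = uniform_measure lborel {0..1::real} \<Otimes>\<^sub>M theta_measure \<alpha>"

lemma prob_M0: assumes "1 < \<alpha>" "\<alpha> \<le> 2" shows "prob_space (M0 \<alpha>)"
proof -
  interpret A: prob_space "uniform_measure lborel {0..1::real}" by (rule prob_U)
  interpret B: prob_space "theta_measure \<alpha>" by (rule prob_theta[OF assms])
  interpret pair_prob_space "uniform_measure lborel {0..1::real}" "theta_measure \<alpha>" ..
  show ?thesis unfolding M0_def by unfold_locales
qed

lemma tree_space_M0: "tree_space \<alpha> = PiM UNIV (\<lambda>_. M0 \<alpha>)"
  unfolding tree_space_def M0_def ..

lemma prob_tree: assumes "1 < \<alpha>" "\<alpha> \<le> 2" shows "prob_space (tree_space \<alpha>)"
  unfolding tree_space_M0 by (intro prob_space_PiM prob_M0[OF assms])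

lemma sets_theta[simp]: "sets (theta_measure \<alpha>) = sets (count_space UNIV)"
  unfolding theta_measure_def by simp

lemma meas_fst[measurable]: "(\<lambda>\<omega>. fst (\<omega> u)) \<in> borel_measurable (tree_space \<alpha>)"
proof -
  have "(\<lambda>\<omega>. \<omega> u) \<in> measurable (tree_space \<alpha>) (M0 \<alpha>)"
    unfolding tree_space_M0 by (rule measurable_component_singleton) simp
  moreover have "fst \<in> measurable (M0 \<alpha>) (uniform_measure lborel {0..1::real})"
    unfolding M0_def by (rule measurable_fst)
  ultimately have "(\<lambda>\<omega>. fst (\<omega> u)) \<in> measurable (tree_space \<alpha>) (uniform_measure lborel {0..1::real})"
    by (rule measurable_compose[where f="\<lambda>\<omega>. \<omega> u"])
  then show ?thesis by (simp cong: measurable_cong_sets)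
qed

lemma meas_snd[measurable]: "(\<lambda>\<omega>. snd (\<omega> u)) \<in> measurable (tree_space \<alpha>) (count_space UNIV)"
proof -
  have "(\<lambda>\<omega>. \<omega> u) \<in> measurable (tree_space \<alpha>) (M0 \<alpha>)"
    unfolding tree_space_M0 by (rule measurable_component_singleton) simp
  moreover have "snd \<in> measurable (M0 \<alpha>) (theta_measure \<alpha>)"
    unfolding M0_def by (rule measurable_snd)
  ultimately have "(\<lambda>\<omega>. snd (\<omega> u)) \<in> measurable (tree_space \<alpha>) (theta_measure \<alpha>)"
    by (rule measurable_compose[where f="\<lambda>\<omega>. \<omega> u"])
  then show ?thesis using measurable_cong_sets[OF refl sets_theta[of \<alpha>], of "tree_space \<alpha>"] by simp
qed

lemma meas_rem_above[measurable]:
  "(\<lambda>\<omega>. rem_above (\<lambda>u. fst (\<omega> u)) v w) \<in> borel_measurable (tree_space \<alpha>)"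
  by (induction w arbitrary: v) simp_all

lemma meas_seg_len[measurable]:
  "(\<lambda>\<omega>. seg_len (\<lambda>u. fst (\<omega> u)) u) \<in> borel_measurable (tree_space \<alpha>)"
  unfolding seg_len_def rem_below_def by (cases "u = []") simp_all

lemma meas_cond_trunc:
  "(\<lambda>\<omega>. cond_trunc n (\<lambda>u. fst (\<omega> u)) (\<lambda>u. snd (\<omega> u)) u) \<in> borel_measurable (tree_space \<alpha>)"
proof (induction n arbitrary: u)
  case 0 then show ?case by simp
next
  case (Suc n)
  have "(\<lambda>\<omega>. (\<lambda>k \<omega>. \<Sum>i<k. cond_trunc n (\<lambda>u. fst (\<omega> u)) (\<lambda>u. snd (\<omega> u)) (u @ [i])) (snd (\<omega> u)) \<omega>)
     \<in> borel_measurable (tree_space \<alpha>)"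
    by (rule measurable_compose_countable[OF _ meas_snd]) (simp add: Suc borel_measurable_sum)
  then show ?case by simp
qed

lemma meas_conductance: "conductance \<in> borel_measurable (tree_space \<alpha>)"
  unfolding conductance_def[abs_def] by (intro borel_measurable_lim_metric meas_cond_trunc)

lemma sqrt_sum_le:
  assumes "finite A" "\<And>i. i \<in> A \<Longrightarrow> 0 \<le> x i"
  shows "sqrt (sum x A) \<le> (\<Sum>i\<in>A. sqrt (x i))"
  using assms
proof (induction A rule: finite_induct)
  case empty then show ?case by simp
next
  case (insert j A)
  have "sqrt (sum x (insert j A)) = sqrt (x j + sum x A)" using insert by simp
  also have "\<dots> \<le> sqrt (x j) + sqrt (sum x A)"
    using insert by (intro sqrt_add_le_add_sqrt) (auto intro: sum_nonneg)
  also have "\<dots> \<le> sqrt (x j) + (\<Sum>i\<in>A. sqrt (x i))" using insert by simp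
  finally show ?case using insert by simp
qed

lemma sqrt_inv_powr: "0 < (y::real) \<Longrightarrow> sqrt (1 / y) = y powr (-1/2)"
proof -
  assume y: "0 < y"
  have "sqrt (1 / y) = (1 / y) powr (1/2)" using y by (simp add: powr_half_sqrt)
  also have "\<dots> = 1 / y powr (1/2)" using y by (simp add: powr_divide)
  also have "\<dots> = y powr (-1/2)" by (simp add: powr_minus_divide)
  finally show ?thesis .
qed

lemma pw_bound:
  fixes a :: real and k :: nat and y :: "nat \<Rightarrow> real"
  assumes a: "0 < a" "a < 1" and k: "k \<ge> 1" and y: "\<And>i. i < k \<Longrightarrow> 0 < y i \<and> y i < 1"
  shows "1 / (a + 1 / (\<Sum>i<k. 1 / ((1 - a) * y i))) \<le>
    sqrt 2 * sqrt (real k) * a powr (-3/4) + (\<Sum>i<k. 1 / sqrt (real k) * a powr (-3/4) * y i powr (-3/4))"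
    (is "?g \<le> ?G1 + ?G2")
proof -
  define S where "S = (\<Sum>i<k. 1 / ((1 - a) * y i))"
  define s where "s = 1 / (sqrt 2 * sqrt (real k))"
  define A where "A = a powr (-3/4)"
  have termpos: "\<And>i. i < k \<Longrightarrow> 0 < 1 / ((1 - a) * y i)" using a y by simp
  have ne: "{..<k} \<noteq> {}" using k lessThan_empty_iff[of k] by simp
  have Spos: "S > 0" unfolding S_def using ne termpos by (intro sum_pos) auto
  have dpos: "a + 1 / S > 0" using Spos a by (intro add_pos_pos) auto
  have gpos: "?g > 0" using dpos unfolding S_def[symmetric] by simp
  have g1: "?g \<le> 1 / a" using Spos a dpos unfolding S_def[symmetric]
    by (intro divide_left_mono) auto
  have g2: "?g \<le> S"
  proof -
    have "?g = S / (a * S + 1)" unfolding S_def[symmetric] using Spos by (simp add: field_simps)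
    also have "\<dots> \<le> S"
    proof -
      have aS: "a * S > 0" using a Spos by simp
      have "S \<le> S * (a * S + 1)" using aS Spos by (simp add: algebra_simps)
      then show ?thesis using aS by (simp add: divide_le_eq)
    qed
    finally show ?thesis .
  qed
  have G1nn: "?G1 \<ge> 0" by simp
  have G2nn: "?G2 \<ge> 0" by (intro sum_nonneg) simp
  have spos: "s > 0" unfolding s_def using k by simp
  have s2: "s^2 = 1 / (2 * real k)" unfolding s_def using k by (simp add: power_divide power_mult_distrib)
  have s4: "s^4 = 1 / (4 * (real k)^2)"
  proof -
    have "s^4 = (s^2)^2" by (simp flip: power_mult)
    then show ?thesis using s2 by (simp add: power_divide power_mult_distrib)
  qed
  have s4le: "s^4 \<le> 1/4"
  proof -
    have "(real k)^2 \<ge> 1" using k by simp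
    then have "1 / (real k)^2 \<le> 1" by (simp add: divide_le_eq)
    then show ?thesis unfolding s4 by simp
  qed
  have s4r: "(s^4) powr (1/4) = s"
  proof -
    have "s^4 = s powr (real 4)" using spos by (simp add: powr_realpow)
    then have "(s^4) powr (1/4) = s powr (real 4 * (1/4))" by (simp add: powr_powr)
    also have "\<dots> = s" using spos by simp
    finally show ?thesis .
  qed
  have ssq: "s * sqrt 2 = 1 / sqrt (real k)" unfolding s_def by simp
  show ?thesis
  proof (cases "a \<ge> s^4")
    case True
    have "s \<le> a powr (1/4)" using True spos s4r powr_mono2[of "1/4" "s^4" a] by simp
    then have h: "a powr (-1/4) \<le> 1 / s" using spos a
      by (simp add: powr_minus_divide[of a "1/4", simplified] divide_le_eq_1 field_simps)
    have "1 / a = a powr (-1/4) * A" unfolding A_def using a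
      by (simp add: powr_add[symmetric] powr_minus_divide[of a 1, simplified])
    also have "\<dots> \<le> (1 / s) * A" unfolding A_def using h by (intro mult_right_mono) auto
    also have "\<dots> = ?G1" unfolding s_def A_def by simp
    finally show ?thesis using g1 G2nn by linarith
  next
    case False
    then have a4: "a < 1/4" using s4le by simp
    have sq: "\<And>z::real. 0 < z \<Longrightarrow> z = sqrt (z * z)" by simp
    have "?g = sqrt (?g * ?g)" by (rule sq[OF gpos])
    also have "\<dots> \<le> sqrt ((1 / a) * S)"
      using g1 g2 gpos a by (intro real_sqrt_le_mono mult_mono) auto
    also have "\<dots> = sqrt (1 / a) * sqrt S" by (rule real_sqrt_mult)
    also have "\<dots> \<le> (s * A) * (\<Sum>i<k. sqrt 2 * y i powr (-3/4))"
    proof (intro mult_mono)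
      have "sqrt (1 / a) = a powr (-1/2)" by (rule sqrt_inv_powr[OF a(1)])
      also have "\<dots> = a powr (1/4) * A" unfolding A_def using a by (simp add: powr_add[symmetric])
      also have "\<dots> \<le> s * A" unfolding A_def
        using False spos s4r powr_mono2[of "1/4" a "s^4"] a by (intro mult_right_mono) auto
      finally show "sqrt (1 / a) \<le> s * A" .
      have "sqrt S \<le> (\<Sum>i<k. sqrt (1 / ((1 - a) * y i)))" unfolding S_def
        using termpos by (intro sqrt_sum_le) (auto intro: less_imp_le)
      also have "\<dots> \<le> (\<Sum>i<k. sqrt 2 * y i powr (-3/4))"
      proof (intro sum_mono)
        fix i assume "i \<in> {..<k}"
        then have yi: "0 < y i" "y i < 1" using y by auto
        have "1 / ((1 - a) * y i) \<le> 2 * (1 / y i)" using a4 yi by (simp add: field_simps)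
        then have "sqrt (1 / ((1 - a) * y i)) \<le> sqrt (2 * (1 / y i))" by (rule real_sqrt_le_mono)
        also have "\<dots> = sqrt 2 * sqrt (1 / y i)" by (rule real_sqrt_mult)
        also have "\<dots> = sqrt 2 * y i powr (-1/2)" using sqrt_inv_powr[OF yi(1)] by simp
        also have "\<dots> \<le> sqrt 2 * y i powr (-3/4)"
          using yi powr_mono'[of "-3/4" "-1/2" "y i"] by (intro mult_left_mono) auto
        finally show "sqrt (1 / ((1 - a) * y i)) \<le> sqrt 2 * y i powr (-3/4)" .
      qed
      finally show "sqrt S \<le> (\<Sum>i<k. sqrt 2 * y i powr (-3/4))" .
    qed (use Spos in \<open>auto simp: A_def spos less_imp_le\<close>)
    also have "\<dots> = (\<Sum>i<k. (s * sqrt 2) * A * y i powr (-3/4))"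
      by (simp add: sum_distrib_left mult_ac)
    also have "\<dots> = ?G2" unfolding ssq A_def by simp
    finally show ?thesis using G1nn by linarith
  qed
qed

lemma rem_above_snoc: "rem_above Y v (w @ [j]) = rem_above Y v w * (1 - Y (v @ w @ [j]))"
  by (induction w arbitrary: v) (simp_all add: mult.assoc)

lemma rem_below_child: "rem_below Y (u @ [i]) = rem_below Y u * (1 - Y u)"
proof (cases u rule: rev_exhaust)
  case Nil then show ?thesis by (simp add: rem_below_def)
next
  case (snoc w j) then show ?thesis by (simp add: rem_below_def rem_above_snoc butlast_append)
qed

lemma rem_below_pos:
  assumes Y: "\<And>u. 0 < Y u \<and> Y u < 1" shows "0 < rem_below Y u"
proof (induction u rule: rev_induct)
  case Nil then show ?case by (simp add: rem_below_def)
next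
  case (snoc i u) then show ?case using Y[of u] by (simp add: rem_below_child)
qed

lemma seg_len_pos:
  assumes Y: "\<And>u. 0 < Y u \<and> Y u < 1" shows "0 < seg_len Y u"
  unfolding seg_len_def using rem_below_pos[where Y=Y, OF Y, of u] Y[of u] by simp

lemma ct_lower:
  assumes Y: "\<And>u. 0 < Y u \<and> Y u < 1" and K: "\<And>u. K u \<ge> 1"
  shows "cond_trunc n Y K u \<ge> 1 / rem_below Y u"
proof (induction n arbitrary: u)
  case 0
  have r: "0 < rem_below Y u" by (rule rem_below_pos[where Y=Y, OF Y])
  have "rem_below Y u * Y u \<le> rem_below Y u" using r Y[of u] by (simp add: mult_left_le)
  then show ?case using r Y[of u] by (simp add: seg_len_def divide_left_mono)
next
  case (Suc n)
  define r where "r = rem_below Y u"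
  define y where "y = Y u"
  define T where "T = (\<Sum>i<K u. cond_trunc n Y K (u @ [i]))"
  have r: "0 < r" unfolding r_def by (rule rem_below_pos[where Y=Y, OF Y])
  have y: "0 < y" "y < 1" unfolding y_def using Y by auto
  have ry: "0 < r * (1 - y)" using r y by simp
  have ch: "cond_trunc n Y K (u @ [i]) \<ge> 1 / (r * (1 - y))" for i
    using Suc[of "u @ [i]"] by (simp add: rem_below_child r_def y_def)
  have chp: "cond_trunc n Y K (u @ [i]) \<ge> 0" for i using ch[of i] ry by (smt (verit) divide_pos_pos)
  have "cond_trunc n Y K (u @ [0]) \<le> T" unfolding T_def
    using K[of u] chp by (intro member_le_sum) auto
  then have T: "T \<ge> 1 / (r * (1 - y))" using ch[of 0] by linarith
  have Tp: "T > 0" using T ry by (smt (verit) divide_pos_pos)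
  have "1 / T \<le> r * (1 - y)" using T Tp ry by (simp add: field_simps)
  then have D: "r * y + 1 / T \<le> r" by (simp add: algebra_simps)
  have Dp: "0 < r * y + 1 / T" using r y Tp by (intro add_pos_pos) auto
  have "1 / r \<le> 1 / (r * y + 1 / T)" using D Dp by (simp add: divide_left_mono)
  then show ?case by (simp add: seg_len_def r_def y_def T_def)
qed

lemma ct_pos:
  assumes Y: "\<And>u. 0 < Y u \<and> Y u < 1" and K: "\<And>u. K u \<ge> 1"
  shows "cond_trunc n Y K u > 0"
  using ct_lower[where Y=Y and K=K and n=n and u=u, OF Y K] rem_below_pos[where Y=Y and u=u, OF Y] by (smt (verit) divide_pos_pos)

lemma ct_sum_pos:
  assumes Y: "\<And>u. 0 < Y u \<and> Y u < 1" and K: "\<And>u. K u \<ge> 1"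
  shows "(\<Sum>i<K u. cond_trunc n Y K (u @ [i])) > 0"
proof -
  have "{..<K u} \<noteq> {}" using K[of u] lessThan_empty_iff[of "K u"] by simp
  then show ?thesis using ct_pos[where Y=Y and K=K, OF Y K] by (intro sum_pos) auto
qed

lemma ct_dec:
  assumes Y: "\<And>u. 0 < Y u \<and> Y u < 1" and K: "\<And>u. K u \<ge> 1"
  shows "cond_trunc (Suc n) Y K u \<le> cond_trunc n Y K u"
proof (induction n arbitrary: u)
  case 0
  have T: "(\<Sum>i<K u. cond_trunc 0 Y K (u @ [i])) > 0" by (rule ct_sum_pos[where Y=Y and K=K, OF Y K])
  have s: "seg_len Y u > 0" by (rule seg_len_pos[where Y=Y, OF Y])
  show ?case using T s by (simp add: divide_left_mono add_pos_pos)
next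
  case (Suc n)
  define T where "T = (\<Sum>i<K u. cond_trunc n Y K (u @ [i]))"
  define T' where "T' = (\<Sum>i<K u. cond_trunc (Suc n) Y K (u @ [i]))"
  have Tp: "T > 0" unfolding T_def by (rule ct_sum_pos[where Y=Y and K=K, OF Y K])
  have T'p: "T' > 0" unfolding T'_def by (rule ct_sum_pos[where Y=Y and K=K, OF Y K])
  have "T' \<le> T" unfolding T_def T'_def by (intro sum_mono Suc.IH)
  then have "1 / T \<le> 1 / T'" using T'p by (simp add: divide_left_mono)
  moreover have s: "seg_len Y u > 0" by (rule seg_len_pos[where Y=Y, OF Y])
  moreover have "0 < seg_len Y u + 1 / T" using s Tp by (intro add_pos_pos) auto
  moreover have "0 < seg_len Y u + 1 / T'" using s T'p by (intro add_pos_pos) auto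
  ultimately have "1 / (seg_len Y u + 1 / T') \<le> 1 / (seg_len Y u + 1 / T)"
    by (intro divide_left_mono) auto
  then show ?case by (simp add: T_def T'_def)
qed

lemma lim_bounds:
  assumes Y: "\<And>u. 0 < Y u \<and> Y u < 1" and K: "\<And>u. K u \<ge> 1"
  shows "1 \<le> lim (\<lambda>n. cond_trunc n Y K []) \<and> lim (\<lambda>n. cond_trunc n Y K []) \<le> cond_trunc 1 Y K []"
proof -
  have dec: "decseq (\<lambda>n. cond_trunc n Y K [])"
    by (rule decseq_SucI[where X="\<lambda>n. cond_trunc n Y K []", OF ct_dec[where Y=Y and K=K and u="[]", OF Y K]])
  have lb: "\<forall>i. 1 \<le> cond_trunc i Y K []"
    using ct_lower[where Y=Y and K=K and u="[]", OF Y K] by (simp add: rem_below_def)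
  obtain L where L: "(\<lambda>n. cond_trunc n Y K []) \<longlonglongrightarrow> L" "\<forall>i. L \<le> cond_trunc i Y K []"
    using decseq_convergent[OF dec lb] by blast
  have "lim (\<lambda>n. cond_trunc n Y K []) = L" using L(1) by (rule limI)
  moreover have "1 \<le> L" using L(1) lb by (intro LIMSEQ_le_const) auto
  moreover have "L \<le> cond_trunc 1 Y K []" using L(2) by blast
  ultimately show ?thesis by simp
qed

lemma ct1_root: "cond_trunc 1 Y K [] =
   1 / (Y [] + 1 / (\<Sum>i<K []. 1 / ((1 - Y []) * Y [i])))"
  by (simp add: seg_len_def rem_below_def)

lemma PiM_split:
  fixes M :: "'a measure"
  assumes M: "prob_space M"
  shows "PiM UNIV (\<lambda>_::nat list. M) =
    distr (M \<Otimes>\<^sub>M PiM (UNIV - {[]::nat list}) (\<lambda>_. M)) (PiM UNIV (\<lambda>_. M)) (\<lambda>(x, X). X([] := x))"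
proof -
  have "insert [] (UNIV - {[]::nat list}) = UNIV" by auto
  then show ?thesis
    using distr_pair_PiM_eq_PiM[of "UNIV - {[]::nat list}" "\<lambda>_. M" "[]"] M by simp
qed

lemma meas_upd:
  "(\<lambda>(x, X). X([] := x)) \<in> measurable (M \<Otimes>\<^sub>M PiM (UNIV - {[]::nat list}) (\<lambda>_. M)) (PiM UNIV (\<lambda>_::nat list. M))"
proof -
  have "(\<lambda>z. (snd z)([] := fst z)) \<in> measurable (M \<Otimes>\<^sub>M PiM (UNIV - {[]::nat list}) (\<lambda>_. M)) (PiM UNIV (\<lambda>_::nat list. M))"
    by (rule measurable_fun_upd[where J="UNIV - {[]}"]) auto
  then show ?thesis unfolding case_prod_beta' .
qed

lemma nn_integral_one_coord:
  fixes M :: "'a measure"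
  assumes M: "prob_space M" and f: "f \<in> borel_measurable M"
  shows "(\<integral>\<^sup>+\<omega>. f (\<omega> u) \<partial>PiM UNIV (\<lambda>_::nat list. M)) = (\<integral>\<^sup>+x. f x \<partial>M)"
proof -
  have "(\<integral>\<^sup>+x. f x \<partial>M) = (\<integral>\<^sup>+x. f x \<partial>distr (PiM UNIV (\<lambda>_::nat list. M)) M (\<lambda>\<omega>. \<omega> u))"
    using distr_PiM_component[of UNIV "\<lambda>_. M" u] M by simp
  also have "\<dots> = (\<integral>\<^sup>+\<omega>. f (\<omega> u) \<partial>PiM UNIV (\<lambda>_::nat list. M))"
    using f by (intro nn_integral_distr) (auto intro: measurable_component_singleton)
  finally show ?thesis by simp
qed

lemma nn_integral_two_coords:
  fixes M :: "'a measure"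
  assumes M: "prob_space M" and v: "v \<noteq> []" and f[measurable]: "f \<in> borel_measurable M"
    and h[measurable]: "h \<in> borel_measurable M"
  shows "(\<integral>\<^sup>+\<omega>. f (\<omega> []) * h (\<omega> v) \<partial>PiM UNIV (\<lambda>_::nat list. M)) = (\<integral>\<^sup>+x. f x \<partial>M) * (\<integral>\<^sup>+y. h y \<partial>M)"
proof -
  define Q where "Q = PiM (UNIV - {[]::nat list}) (\<lambda>_::nat list. M)"
  interpret Q: prob_space Q unfolding Q_def by (intro prob_space_PiM M)
  have mT: "(\<lambda>(x, X). X([] := x)) \<in> measurable (M \<Otimes>\<^sub>M Q) (PiM UNIV (\<lambda>_::nat list. M))"
    unfolding Q_def by (rule meas_upd)
  have "(\<integral>\<^sup>+\<omega>. f (\<omega> []) * h (\<omega> v) \<partial>PiM UNIV (\<lambda>_::nat list. M))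
      = (\<integral>\<^sup>+\<omega>. f (\<omega> []) * h (\<omega> v) \<partial>distr (M \<Otimes>\<^sub>M Q) (PiM UNIV (\<lambda>_. M)) (\<lambda>(x, X). X([] := x)))"
    unfolding Q_def using PiM_split[OF M] by simp
  also have "\<dots> = (\<integral>\<^sup>+z. f (fst z) * h (snd z v) \<partial>(M \<Otimes>\<^sub>M Q))"
    using v by (subst nn_integral_distr[OF mT]) (auto simp: case_prod_beta)
  also have "\<dots> = (\<integral>\<^sup>+x. \<integral>\<^sup>+X. f x * h (X v) \<partial>Q \<partial>M)"
    using v unfolding Q_def by (subst Q.nn_integral_fst[symmetric, unfolded Q_def]) (simp_all, measurable)
  also have "\<dots> = (\<integral>\<^sup>+x. f x * \<integral>\<^sup>+X. h (X v) \<partial>Q \<partial>M)"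
    using v unfolding Q_def by (intro nn_integral_cong nn_integral_cmult) measurable
  also have "(\<integral>\<^sup>+X. h (X v) \<partial>Q) = (\<integral>\<^sup>+y. h y \<partial>M)"
  proof -
    have "(\<integral>\<^sup>+y. h y \<partial>M) = (\<integral>\<^sup>+y. h y \<partial>distr Q M (\<lambda>X. X v))"
      unfolding Q_def using distr_PiM_component[of "UNIV - {[]::nat list}" "\<lambda>_. M" v] M v by simp
    also have "\<dots> = (\<integral>\<^sup>+X. h (X v) \<partial>Q)"
      unfolding Q_def using v by (intro nn_integral_distr) (auto intro: measurable_component_singleton)
    finally show ?thesis by simp
  qed
  also have "(\<integral>\<^sup>+x. f x * (\<integral>\<^sup>+y. h y \<partial>M) \<partial>M) = (\<integral>\<^sup>+x. f x \<partial>M) * (\<integral>\<^sup>+y. h y \<partial>M)"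
    by (rule nn_integral_multc) simp
  finally show ?thesis .
qed

definition I34 :: ennreal where
  "I34 = (\<integral>\<^sup>+ a. ennreal (a powr (-3/4)) \<partial>uniform_measure lborel {0..1::real})"

lemma I34_eq: "I34 = 4"
proof -
  have hi: "((\<lambda>x::real. x powr (-3/4)) has_integral (1 powr (-3/4 + 1) / (-3/4 + 1))) {0..1}"
    by (rule has_integral_powr_from_0) auto
  have "(\<integral>\<^sup>+ x. ennreal (x powr (-3/4)) * indicator {0..1::real} x \<partial>lborel) = ennreal (1 powr (-3/4 + 1) / (-3/4 + 1))"
    by (rule nn_integral_has_integral_lebesgue'[OF _ hi]) simp
  also have "\<dots> = 4" by simp
  finally have n: "(\<integral>\<^sup>+ x. ennreal (x powr (-3/4)) * indicator {0..1::real} x \<partial>lborel) = 4" .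
  have "I34 = (\<integral>\<^sup>+ x. ennreal (x powr (-3/4)) * indicator {0..1::real} x \<partial>lborel) / emeasure lborel {0..1::real}"
    unfolding I34_def by (rule nn_integral_uniform_measure) auto
  then show ?thesis using n by (simp add: divide_ennreal_def)
qed

definition bsq :: "nat \<Rightarrow> real" where
  "bsq k = (if k < 2 then 0 else 2 / (real k * (real k - 1)) * sqrt (real k))"

lemma bsq_nonneg: "bsq k \<ge> 0" unfolding bsq_def by auto

lemma bsq_le: "bsq k \<le> 4 * real k powr (-3/2)"
proof (cases "k < 2")
  case True then show ?thesis unfolding bsq_def by simp
next
  case False
  then have k: "real k \<ge> 2" by simp
  have kp: "real k > 0" using k by simp
  have "real k * (real k - 1) \<ge> (real k)^2 / 2" using k by (simp add: power2_eq_square field_simps)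
  then have "2 / (real k * (real k - 1)) \<le> 2 / ((real k)^2 / 2)"
    using k by (intro divide_left_mono) auto
  then have "2 / (real k * (real k - 1)) * sqrt (real k) \<le> 4 / (real k)^2 * sqrt (real k)"
    by (intro mult_right_mono) auto
  then have "bsq k \<le> 4 / (real k)^2 * sqrt (real k)" unfolding bsq_def using False by simp
  also have "\<dots> = 4 * real k powr (-3/2)"
  proof -
    have s1: "sqrt (real k) = real k powr (1/2)" using kp by (simp add: powr_half_sqrt)
    have p2: "real k powr 2 = (real k)^2" using powr_realpow[OF kp, of 2] by simp
    have "real k powr (-3/2) = real k powr (1/2 - 2)" by simp
    also have "\<dots> = real k powr (1/2) / real k powr 2" by (rule powr_diff)
    finally have e1: "real k powr (-3/2) = sqrt (real k) / (real k)^2" using s1 p2 by simp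
    show ?thesis unfolding e1 by simp
  qed
  finally show ?thesis .
qed

lemma bsq_summable: "summable bsq"
proof (rule summable_comparison_test)
  show "\<exists>N. \<forall>n\<ge>N. norm (bsq n) \<le> 4 * real n powr (-3/2)"
    using bsq_le bsq_nonneg by auto
  show "summable (\<lambda>n. 4 * real n powr (-3/2))"
    by (intro summable_mult) (simp add: summable_real_powr_iff)
qed

definition BS :: real where "BS = suminf bsq"

lemma ESK:
  assumes "1 < \<alpha>" "\<alpha> \<le> 2"
  shows "(\<integral>\<^sup>+ k. ennreal (sqrt (real k)) \<partial>theta_measure \<alpha>) \<le> ennreal BS"
proof -
  have "(\<integral>\<^sup>+ k. ennreal (sqrt (real k)) \<partial>theta_measure \<alpha>)
      = (\<integral>\<^sup>+ k. ennreal (theta \<alpha> k) * ennreal (sqrt (real k)) \<partial>count_space UNIV)"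
    unfolding theta_measure_def by (rule nn_integral_density) auto
  also have "\<dots> \<le> (\<integral>\<^sup>+ k. ennreal (bsq k) \<partial>count_space UNIV)"
  proof (intro nn_integral_mono)
    fix k :: nat
    have "theta \<alpha> k * sqrt (real k) \<le> bsq k"
    proof (cases "k < 2")
      case True then show ?thesis by (simp add: theta_small bsq_def)
    next
      case False
      have "theta \<alpha> k * sqrt (real k) \<le> 2 / (real k * (real k - 1)) * sqrt (real k)"
        using theta_le[OF assms, of k] False by (intro mult_right_mono) auto
      then show ?thesis unfolding bsq_def using False by simp
    qed
    then show "ennreal (theta \<alpha> k) * ennreal (sqrt (real k)) \<le> ennreal (bsq k)"
      using theta_nonneg[OF assms, of k] by (simp add: ennreal_mult'[symmetric] ennreal_leI)
  qed
  also have "\<dots> = (\<Sum>k. ennreal (bsq k))" by (rule nn_integral_count_space_nat)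
  also have "\<dots> = ennreal BS" unfolding BS_def
    by (rule suminf_ennreal2) (auto intro: bsq_nonneg bsq_summable)
  finally show ?thesis .
qed

lemma sigma_theta: assumes "1 < \<alpha>" "\<alpha> \<le> 2" shows "sigma_finite_measure (theta_measure \<alpha>)"
proof -
  interpret prob_space "theta_measure \<alpha>" by (rule prob_theta[OF assms])
  show ?thesis by unfold_locales
qed

lemma meas_U_borel: "(f :: real \<Rightarrow> ennreal) \<in> borel_measurable borel \<Longrightarrow> f \<in> borel_measurable (uniform_measure lborel {0..1::real})"
  by (simp cong: measurable_cong_sets)

lemma snd_meas: "snd \<in> measurable (uniform_measure lborel {0..1::real} \<Otimes>\<^sub>M theta_measure \<alpha>) (count_space UNIV)"
proof -
  have "snd \<in> measurable (uniform_measure lborel {0..1::real} \<Otimes>\<^sub>M theta_measure \<alpha>) (theta_measure \<alpha>)"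
    by (rule measurable_snd)
  then show ?thesis using measurable_cong_sets[OF refl sets_theta[of \<alpha>], of "uniform_measure lborel {0..1::real} \<Otimes>\<^sub>M theta_measure \<alpha>"] by simp
qed

lemma meas_theta_any: "f \<in> measurable (theta_measure \<alpha>) (N :: 'b measure) \<longleftrightarrow> f \<in> space (count_space UNIV) \<rightarrow> space N"
  using measurable_cong_sets[OF sets_theta[of \<alpha>] refl, of N] by (simp add: measurable_count_space_eq1)

lemma meas_theta_borel: "(f :: nat \<Rightarrow> ennreal) \<in> borel_measurable (theta_measure \<alpha>)"
  by (simp add: meas_theta_any)

lemma W_bound:
  assumes "1 < \<alpha>" "\<alpha> \<le> 2"
  shows "(\<integral>\<^sup>+ x. ennreal (sqrt (real (snd x)) * fst x powr (-3/4)) \<partial>M0 \<alpha>) \<le> 4 * ennreal BS"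
proof -
  interpret T: sigma_finite_measure "theta_measure \<alpha>" by (rule sigma_theta[OF assms])
  have m: "(\<lambda>x. ennreal (sqrt (real (snd x)) * fst x powr (-3/4))) \<in> borel_measurable (uniform_measure lborel {0..1::real} \<Otimes>\<^sub>M theta_measure \<alpha>)"
    by (rule measurable_compose_countable[where g=snd, OF _ snd_meas]) (intro measurable_compose[OF measurable_fst] meas_U_borel, measurable)
  have "(\<integral>\<^sup>+ x. ennreal (sqrt (real (snd x)) * fst x powr (-3/4)) \<partial>M0 \<alpha>)
     = (\<integral>\<^sup>+ a. \<integral>\<^sup>+ k. ennreal (sqrt (real k) * a powr (-3/4)) \<partial>theta_measure \<alpha> \<partial>uniform_measure lborel {0..1::real})"
    unfolding M0_def using T.nn_integral_fst[OF m] by simp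
  also have "\<dots> = (\<integral>\<^sup>+ a. ennreal (a powr (-3/4)) * (\<integral>\<^sup>+ k. ennreal (sqrt (real k)) \<partial>theta_measure \<alpha>) \<partial>uniform_measure lborel {0..1::real})"
  proof (intro nn_integral_cong)
    fix a :: real
    have "(\<integral>\<^sup>+ k. ennreal (sqrt (real k) * a powr (-3/4)) \<partial>theta_measure \<alpha>)
       = (\<integral>\<^sup>+ k. ennreal (sqrt (real k)) * ennreal (a powr (-3/4)) \<partial>theta_measure \<alpha>)"
      by (intro nn_integral_cong) (simp add: ennreal_mult)
    also have "\<dots> = (\<integral>\<^sup>+ k. ennreal (sqrt (real k)) \<partial>theta_measure \<alpha>) * ennreal (a powr (-3/4))"
      by (rule nn_integral_multc[OF meas_theta_borel])
    finally show "(\<integral>\<^sup>+ k. ennreal (sqrt (real k) * a powr (-3/4)) \<partial>theta_measure \<alpha>)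
       = ennreal (a powr (-3/4)) * (\<integral>\<^sup>+ k. ennreal (sqrt (real k)) \<partial>theta_measure \<alpha>)"
      by (simp add: mult.commute)
  qed
  also have "\<dots> = I34 * (\<integral>\<^sup>+ k. ennreal (sqrt (real k)) \<partial>theta_measure \<alpha>)"
    unfolding I34_def by (rule nn_integral_multc) (rule meas_U_borel, measurable)
  also have "\<dots> \<le> 4 * ennreal BS" unfolding I34_eq using ESK[OF assms] by (intro mult_left_mono) auto
  finally show ?thesis .
qed

lemma J_eq:
  assumes "1 < \<alpha>" "\<alpha> \<le> 2"
  shows "(\<integral>\<^sup>+ z. ennreal (fst z powr (-3/4)) \<partial>M0 \<alpha>) = 4"
proof -
  interpret T: prob_space "theta_measure \<alpha>" by (rule prob_theta[OF assms])
  have m: "(\<lambda>z. ennreal (fst z powr (-3/4))) \<in> borel_measurable (uniform_measure lborel {0..1::real} \<Otimes>\<^sub>M theta_measure \<alpha>)"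
    by (intro measurable_compose[OF measurable_fst] meas_U_borel) measurable
  have "(\<integral>\<^sup>+ z. ennreal (fst z powr (-3/4)) \<partial>M0 \<alpha>)
     = (\<integral>\<^sup>+ a. \<integral>\<^sup>+ k. ennreal (a powr (-3/4)) \<partial>theta_measure \<alpha> \<partial>uniform_measure lborel {0..1::real})"
    unfolding M0_def using T.nn_integral_fst[OF m] by simp
  also have "\<dots> = I34" unfolding I34_def
    by (intro nn_integral_cong) (simp add: T.emeasure_space_1)
  finally show ?thesis using I34_eq by simp
qed

definition fI :: "nat \<Rightarrow> real \<times> nat \<Rightarrow> ennreal" where
  "fI i x = (if i < snd x then ennreal (1 / sqrt (real (snd x)) * fst x powr (-3/4)) else 0)"
definition hh :: "real \<times> nat \<Rightarrow> ennreal" where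
  "hh z = ennreal (fst z powr (-3/4))"
definition G1 :: "real \<times> nat \<Rightarrow> ennreal" where
  "G1 x = ennreal (sqrt 2 * sqrt (real (snd x)) * fst x powr (-3/4))"

lemma meas_M0_gen:
  fixes gg :: "real \<Rightarrow> nat \<Rightarrow> ennreal"
  assumes "\<And>k. (\<lambda>a. gg a k) \<in> borel_measurable borel"
  shows "(\<lambda>x. gg (fst x) (snd x)) \<in> borel_measurable (M0 \<alpha>)"
  unfolding M0_def
  by (rule measurable_compose_countable[where f="\<lambda>k x. gg (fst x) k" and g=snd, OF _ snd_meas])
     (intro measurable_compose[OF measurable_fst] meas_U_borel assms)

lemma meas_fI[measurable]: "fI i \<in> borel_measurable (M0 \<alpha>)"
proof -
  have "(\<lambda>x. (\<lambda>a k. if i < k then ennreal (1 / sqrt (real k) * a powr (-3/4)) else 0) (fst x) (snd x)) \<in> borel_measurable (M0 \<alpha>)"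
    by (rule meas_M0_gen) measurable
  then show ?thesis unfolding fI_def[abs_def] by simp
qed

lemma meas_hh[measurable]: "hh \<in> borel_measurable (M0 \<alpha>)"
proof -
  have "(\<lambda>x. (\<lambda>a k. ennreal (a powr (-3/4))) (fst x) (snd x)) \<in> borel_measurable (M0 \<alpha>)"
    by (rule meas_M0_gen) measurable
  then show ?thesis unfolding hh_def[abs_def] by simp
qed

lemma meas_G1[measurable]: "G1 \<in> borel_measurable (M0 \<alpha>)"
proof -
  have "(\<lambda>x. (\<lambda>a k. ennreal (sqrt 2 * sqrt (real k) * a powr (-3/4))) (fst x) (snd x)) \<in> borel_measurable (M0 \<alpha>)"
    by (rule meas_M0_gen) measurable
  then show ?thesis unfolding G1_def[abs_def] by simp
qed

lemma meas_coord: "g \<in> borel_measurable (M0 \<alpha>) \<Longrightarrow> (\<lambda>\<omega>. g (\<omega> u)) \<in> borel_measurable (tree_space \<alpha>)"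
  unfolding tree_space_M0 by (rule measurable_compose[OF measurable_component_singleton]) auto

lemma AE_good:
  assumes "1 < \<alpha>" "\<alpha> \<le> 2"
  shows "AE \<omega> in tree_space \<alpha>. \<forall>u. 0 < fst (\<omega> u) \<and> fst (\<omega> u) < 1 \<and> 1 \<le> snd (\<omega> u)"
proof -
  interpret T: prob_space "theta_measure \<alpha>" by (rule prob_theta[OF assms])
  interpret U: prob_space "uniform_measure lborel {0..1::real}" by (rule prob_U)
  interpret pair_sigma_finite "uniform_measure lborel {0..1::real}" "theta_measure \<alpha>" ..
  have setm: "{x \<in> space (uniform_measure lborel {0..1::real} \<Otimes>\<^sub>M theta_measure \<alpha>). 0 < fst x \<and> fst x < 1 \<and> 1 \<le> snd x}
     = {0<..<1} \<times> {1..}"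
    by (auto simp: space_pair_measure theta_measure_def)
  have sets: "{x \<in> space (uniform_measure lborel {0..1::real} \<Otimes>\<^sub>M theta_measure \<alpha>). 0 < fst x \<and> fst x < 1 \<and> 1 \<le> snd x}
     \<in> sets (uniform_measure lborel {0..1::real} \<Otimes>\<^sub>M theta_measure \<alpha>)"
    unfolding setm by (intro pair_measureI) auto
  have aeU: "AE a in uniform_measure lborel {0..1::real}. 0 < a \<and> a < 1"
  proof (rule AE_uniform_measureI)
    show "AE x in lborel. x \<in> {0..1::real} \<longrightarrow> 0 < x \<and> x < 1"
      using AE_lborel_singleton[of "0::real"] AE_lborel_singleton[of "1::real"]
      by eventually_elim auto
  qed auto
  have aeT: "AE k in theta_measure \<alpha>. 1 \<le> k"
    unfolding theta_measure_def
  proof (subst AE_density)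
    show "AE x in count_space UNIV. 0 < ennreal (theta \<alpha> x) \<longrightarrow> 1 \<le> x"
      unfolding AE_count_space
    proof (intro ballI impI)
      fix x :: nat assume "0 < ennreal (theta \<alpha> x)"
      then have "theta \<alpha> x \<noteq> 0" by auto
      then show "1 \<le> x" using theta_small[of x \<alpha>] by (cases "x < 2") auto
    qed
  qed auto
  have ae0: "AE z in M0 \<alpha>. 0 < fst z \<and> fst z < 1 \<and> 1 \<le> snd z"
    unfolding M0_def
    by (rule AE_pair_measure[OF sets]) (use aeU aeT in \<open>auto elim: AE_mp\<close>)
  show ?thesis
    unfolding AE_all_countable
  proof
    fix u :: "nat list"
    show "AE \<omega> in tree_space \<alpha>. 0 < fst (\<omega> u) \<and> fst (\<omega> u) < 1 \<and> 1 \<le> snd (\<omega> u)"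
      unfolding tree_space_M0 using prob_M0[OF assms] ae0
      by (intro AE_PiM_component[where P="\<lambda>z. 0 < fst z \<and> fst z < 1 \<and> 1 \<le> snd z"]) auto
  qed
qed

lemma cond_le:
  assumes good: "\<forall>u. 0 < fst (\<omega> u) \<and> fst (\<omega> u) < 1 \<and> 1 \<le> snd (\<omega> u)"
  shows "1 \<le> conductance \<omega> \<and> ennreal (conductance \<omega>) \<le> G1 (\<omega> []) + (\<Sum>i. fI i (\<omega> []) * hh (\<omega> [i]))"
proof -
  define Y where "Y = (\<lambda>u. fst (\<omega> u))"
  define K where "K = (\<lambda>u. snd (\<omega> u))"
  have Y: "\<And>u. 0 < Y u \<and> Y u < 1" and K: "\<And>u. K u \<ge> 1" using good unfolding Y_def K_def by auto
  have C: "conductance \<omega> = lim (\<lambda>n. cond_trunc n Y K [])" unfolding conductance_def Y_def K_def ..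
  have lb: "1 \<le> conductance \<omega> \<and> conductance \<omega> \<le> cond_trunc 1 Y K []"
    unfolding C by (rule lim_bounds[where Y=Y and K=K, OF Y K])
  define a where "a = Y []"
  define k where "k = K []"
  define y where "y = (\<lambda>i. Y [i])"
  have a: "0 < a" "a < 1" unfolding a_def using Y by auto
  have k: "k \<ge> 1" unfolding k_def using K by auto
  have y: "\<And>i. i < k \<Longrightarrow> 0 < y i \<and> y i < 1" unfolding y_def using Y by auto
  have "cond_trunc 1 Y K [] = 1 / (a + 1 / (\<Sum>i<k. 1 / ((1 - a) * y i)))"
    unfolding a_def k_def y_def by (rule ct1_root)
  also have "\<dots> \<le> sqrt 2 * sqrt (real k) * a powr (-3/4) + (\<Sum>i<k. 1 / sqrt (real k) * a powr (-3/4) * y i powr (-3/4))"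
    by (rule pw_bound[OF a k y])
  finally have cb: "conductance \<omega> \<le> sqrt 2 * sqrt (real k) * a powr (-3/4) + (\<Sum>i<k. 1 / sqrt (real k) * a powr (-3/4) * y i powr (-3/4))"
    using lb by linarith
  have nn: "\<And>i. 0 \<le> 1 / sqrt (real k) * a powr (-3/4) * y i powr (-3/4)" by simp
  have "ennreal (conductance \<omega>) \<le> ennreal (sqrt 2 * sqrt (real k) * a powr (-3/4) + (\<Sum>i<k. 1 / sqrt (real k) * a powr (-3/4) * y i powr (-3/4)))"
    by (rule ennreal_leI[OF cb])
  also have "\<dots> = G1 (\<omega> []) + (\<Sum>i<k. ennreal (1 / sqrt (real k) * a powr (-3/4) * y i powr (-3/4)))"
    using nn by (simp add: G1_def a_def k_def Y_def K_def sum_nonneg)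
  also have "(\<Sum>i<k. ennreal (1 / sqrt (real k) * a powr (-3/4) * y i powr (-3/4))) = (\<Sum>i. fI i (\<omega> []) * hh (\<omega> [i]))"
  proof -
    have "(\<Sum>i. fI i (\<omega> []) * hh (\<omega> [i])) = (\<Sum>i\<in>{..<k}. fI i (\<omega> []) * hh (\<omega> [i]))"
      by (rule suminf_finite) (auto simp: fI_def k_def K_def)
    also have "\<dots> = (\<Sum>i<k. ennreal (1 / sqrt (real k) * a powr (-3/4) * y i powr (-3/4)))"
    proof (intro sum.cong refl)
      fix i assume "i \<in> {..<k}"
      then have "fI i (\<omega> []) = ennreal (1 / sqrt (real k) * a powr (-3/4))"
        by (simp add: fI_def k_def K_def a_def Y_def)
      moreover have "hh (\<omega> [i]) = ennreal (y i powr (-3/4))" by (simp add: hh_def y_def Y_def)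
      moreover have "ennreal (1 / sqrt (real k) * a powr (-3/4)) * ennreal (y i powr (-3/4)) = ennreal (1 / sqrt (real k) * a powr (-3/4) * y i powr (-3/4))"
        by (rule ennreal_mult[symmetric]) auto
      ultimately show "fI i (\<omega> []) * hh (\<omega> [i]) = ennreal (1 / sqrt (real k) * a powr (-3/4) * y i powr (-3/4))"
        by (simp only:)
    qed
    finally show ?thesis by simp
  qed
  finally show ?thesis using lb by simp
qed

lemma BS_nonneg: "BS \<ge> 0" unfolding BS_def by (rule suminf_nonneg[OF bsq_summable bsq_nonneg])

lemma sum_fI: "(\<Sum>i. fI i x) = ennreal (sqrt (real (snd x)) * fst x powr (-3/4))"
proof -
  have "(\<Sum>i. fI i x) = (\<Sum>i\<in>{..<snd x}. fI i x)"
    by (rule suminf_finite) (auto simp: fI_def)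
  also have "\<dots> = (\<Sum>i\<in>{..<snd x}. ennreal (1 / sqrt (real (snd x)) * fst x powr (-3/4)))"
    by (intro sum.cong refl) (simp add: fI_def)
  also have "\<dots> = ennreal (real (snd x) * (1 / sqrt (real (snd x)) * fst x powr (-3/4)))"
  proof -
    have "(\<Sum>i\<in>{..<snd x}. ennreal (1 / sqrt (real (snd x)) * fst x powr (-3/4)))
        = ennreal (real (snd x)) * ennreal (1 / sqrt (real (snd x)) * fst x powr (-3/4))"
      by (simp add: ennreal_of_nat_eq_real_of_nat)
    also have "\<dots> = ennreal (real (snd x) * (1 / sqrt (real (snd x)) * fst x powr (-3/4)))"
      by (rule ennreal_mult[symmetric]) auto
    finally show ?thesis .
  qed
  also have "real (snd x) * (1 / sqrt (real (snd x)) * fst x powr (-3/4)) = sqrt (real (snd x)) * fst x powr (-3/4)"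
  proof -
    have "real (snd x) * (1 / sqrt (real (snd x)) * fst x powr (-3/4)) = (real (snd x) / sqrt (real (snd x))) * fst x powr (-3/4)"
      by simp
    also have "\<dots> = sqrt (real (snd x)) * fst x powr (-3/4)" using real_div_sqrt[of "real (snd x)"] by simp
    finally show ?thesis .
  qed
  finally show ?thesis .
qed

lemma nnC_bound:
  assumes "1 < \<alpha>" "\<alpha> \<le> 2"
  shows "(\<integral>\<^sup>+\<omega>. ennreal (conductance \<omega>) \<partial>tree_space \<alpha>) \<le> ennreal ((sqrt 2 + 4) * (4 * BS))"
proof -
  have pM: "prob_space (M0 \<alpha>)" by (rule prob_M0[OF assms])
  define W where "W = (\<integral>\<^sup>+ x. ennreal (sqrt (real (snd x)) * fst x powr (-3/4)) \<partial>M0 \<alpha>)"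
  have mG[measurable]: "(\<lambda>\<omega>. G1 (\<omega> [])) \<in> borel_measurable (tree_space \<alpha>)" by (rule meas_coord[OF meas_G1])
  have mF[measurable]: "(\<lambda>\<omega>. fI i (\<omega> [])) \<in> borel_measurable (tree_space \<alpha>)" for i by (rule meas_coord[OF meas_fI])
  have mh[measurable]: "(\<lambda>\<omega>. hh (\<omega> [i])) \<in> borel_measurable (tree_space \<alpha>)" for i by (rule meas_coord[OF meas_hh])
  have mH: "(\<lambda>\<omega>. fI i (\<omega> []) * hh (\<omega> [i])) \<in> borel_measurable (tree_space \<alpha>)" for i by measurable
  have "(\<integral>\<^sup>+\<omega>. ennreal (conductance \<omega>) \<partial>tree_space \<alpha>)
      \<le> (\<integral>\<^sup>+\<omega>. G1 (\<omega> []) + (\<Sum>i. fI i (\<omega> []) * hh (\<omega> [i])) \<partial>tree_space \<alpha>)"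
  proof (rule nn_integral_mono_AE)
    show "AE \<omega> in tree_space \<alpha>. ennreal (conductance \<omega>) \<le> G1 (\<omega> []) + (\<Sum>i. fI i (\<omega> []) * hh (\<omega> [i]))"
      using AE_good[OF assms]
    proof eventually_elim
      case (elim \<omega>) then show ?case using cond_le[of \<omega>] by blast
    qed
  qed
  also have "\<dots> = (\<integral>\<^sup>+\<omega>. G1 (\<omega> []) \<partial>tree_space \<alpha>) + (\<integral>\<^sup>+\<omega>. (\<Sum>i. fI i (\<omega> []) * hh (\<omega> [i])) \<partial>tree_space \<alpha>)"
    by (rule nn_integral_add) (measurable, use mH in measurable)
  also have "(\<integral>\<^sup>+\<omega>. G1 (\<omega> []) \<partial>tree_space \<alpha>) = (\<integral>\<^sup>+x. G1 x \<partial>M0 \<alpha>)"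
    unfolding tree_space_M0 by (rule nn_integral_one_coord[OF pM meas_G1])
  also have "(\<integral>\<^sup>+x. G1 x \<partial>M0 \<alpha>) = ennreal (sqrt 2) * W"
  proof -
    have "(\<integral>\<^sup>+x. G1 x \<partial>M0 \<alpha>) = (\<integral>\<^sup>+x. ennreal (sqrt 2) * ennreal (sqrt (real (snd x)) * fst x powr (-3/4)) \<partial>M0 \<alpha>)"
      by (intro nn_integral_cong) (simp add: G1_def ennreal_mult[symmetric] mult.assoc)
    also have "\<dots> = ennreal (sqrt 2) * W" unfolding W_def
    proof (rule nn_integral_cmult)
      have "(\<lambda>x. (\<lambda>a k. ennreal (sqrt (real k) * a powr (-3/4))) (fst x) (snd x)) \<in> borel_measurable (M0 \<alpha>)"
        by (rule meas_M0_gen) measurable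
      then show "(\<lambda>x. ennreal (sqrt (real (snd x)) * fst x powr (-3/4))) \<in> borel_measurable (M0 \<alpha>)" by simp
    qed
    finally show ?thesis .
  qed
  also have "(\<integral>\<^sup>+\<omega>. (\<Sum>i. fI i (\<omega> []) * hh (\<omega> [i])) \<partial>tree_space \<alpha>)
      = (\<Sum>i. \<integral>\<^sup>+\<omega>. fI i (\<omega> []) * hh (\<omega> [i]) \<partial>tree_space \<alpha>)"
    by (rule nn_integral_suminf[OF mH])
  also have "\<dots> = (\<Sum>i. (\<integral>\<^sup>+x. fI i x \<partial>M0 \<alpha>) * 4)"
  proof (intro suminf_cong)
    fix i
    show "(\<integral>\<^sup>+\<omega>. fI i (\<omega> []) * hh (\<omega> [i]) \<partial>tree_space \<alpha>) = (\<integral>\<^sup>+x. fI i x \<partial>M0 \<alpha>) * 4"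
    proof -
      have Jh: "integral\<^sup>N (M0 \<alpha>) hh = 4" unfolding hh_def[abs_def] by (rule J_eq[OF assms])
      show ?thesis unfolding tree_space_M0
        by (subst nn_integral_two_coords[OF pM _ meas_fI meas_hh]) (auto simp: Jh)
    qed
  qed
  also have "\<dots> = (\<Sum>i. (\<integral>\<^sup>+x. fI i x \<partial>M0 \<alpha>)) * 4" by (rule ennreal_suminf_multc)
  also have "(\<Sum>i. (\<integral>\<^sup>+x. fI i x \<partial>M0 \<alpha>)) = W"
    unfolding W_def sum_fI[symmetric] by (rule nn_integral_suminf[symmetric]) (rule meas_fI)
  finally have b: "(\<integral>\<^sup>+\<omega>. ennreal (conductance \<omega>) \<partial>tree_space \<alpha>) \<le> ennreal (sqrt 2) * W + W * 4" .
  have Wb: "W \<le> 4 * ennreal BS" unfolding W_def by (rule W_bound[OF assms])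
  have "ennreal (sqrt 2) * W + W * 4 \<le> ennreal (sqrt 2) * (4 * ennreal BS) + (4 * ennreal BS) * 4"
    using Wb by (intro add_mono mult_left_mono mult_right_mono) auto
  also have "\<dots> = ennreal ((sqrt 2 + 4) * (4 * BS))"
  proof -
    have e1: "4 * ennreal BS = ennreal (4 * BS)" using ennreal_mult[of 4 BS] BS_nonneg by simp
    have "ennreal (sqrt 2) * ennreal (4 * BS) = ennreal (sqrt 2 * (4 * BS))"
      by (rule ennreal_mult[symmetric]) (use BS_nonneg in auto)
    moreover have "ennreal (4 * BS) * 4 = ennreal (4 * BS * 4)" using ennreal_mult[of "4 * BS" 4] BS_nonneg by simp
    moreover have "ennreal (sqrt 2 * (4 * BS)) + ennreal (4 * BS * 4) = ennreal (sqrt 2 * (4 * BS) + 4 * BS * 4)"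
      using BS_nonneg by (simp add: ennreal_plus)
    moreover have "sqrt 2 * (4 * BS) + 4 * BS * 4 = (sqrt 2 + 4) * (4 * BS)" by (simp add: algebra_simps)
    ultimately show ?thesis unfolding e1 by simp
  qed
  finally show ?thesis using b by simp
qed

lemma ratio_bounds:
  fixes s t :: real
  assumes "1 \<le> s" "1 \<le> t"
  shows "1 \<le> s * t / (s + t - 1)" "s * t / (s + t - 1) \<le> t"
proof -
  have d: "s + t - 1 > 0" using assms by simp
  have "s + t - 1 \<le> s * t"
  proof -
    have "0 \<le> (s - 1) * (t - 1)" using assms by simp
    then show ?thesis by (simp add: algebra_simps)
  qed
  then show "1 \<le> s * t / (s + t - 1)" using d by (simp add: le_divide_eq)
  have "s * t \<le> t * (s + t - 1)"
  proof -
    have "0 \<le> t * (t - 1)" using assms by simp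
    then show ?thesis by (simp add: algebra_simps)
  qed
  then show "s * t / (s + t - 1) \<le> t" using d by (simp add: divide_le_eq)
qed

lemma beta_le:
  assumes a: "1 < \<alpha>" "\<alpha> \<le> 2"
  shows "beta \<alpha> \<le> ((sqrt 2 + 4) * (4 * BS))^2"
proof -
  define R where "R = (sqrt 2 + 4) * (4 * BS)"
  have R0: "R \<ge> 0" unfolding R_def using BS_nonneg by simp
  have Rsq: "0 \<le> ((sqrt 2 + 4) * (4 * BS))^2" by (rule zero_le_power2)
  define \<gamma> where "\<gamma> = gamma_law \<alpha>"
  interpret P: prob_space "tree_space \<alpha>" by (rule prob_tree[OF a])
  have mc: "conductance \<in> borel_measurable (tree_space \<alpha>)" by (rule meas_conductance)
  interpret G: prob_space \<gamma> unfolding \<gamma>_def gamma_law_def by (rule P.prob_space_distr[OF mc])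
  have AEc: "AE \<omega> in tree_space \<alpha>. 1 \<le> conductance \<omega>"
    using AE_good[OF a]
  proof eventually_elim
    case (elim \<omega>) then show ?case using cond_le[of \<omega>] by blast
  qed
  have setm: "{x \<in> space borel. 1 \<le> (x::real)} \<in> sets borel" by measurable
  have AE1: "AE s in \<gamma>. 1 \<le> s"
    unfolding \<gamma>_def gamma_law_def using AEc by (subst AE_distr_iff[OF mc setm])
  define m where "m = (\<integral>s. s \<partial>\<gamma>)"
  define D where "D = (\<integral>s. (\<integral>t. s * t / (s + t - 1) \<partial>\<gamma>) \<partial>\<gamma>)"
  have beta_eq: "beta \<alpha> = (m^2 / D - 1) / 2" unfolding beta_def m_def D_def \<gamma>_def ..
  show ?thesis
  proof (cases "integrable \<gamma> (\<lambda>s. s)")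
    case False
    then have "m = 0" unfolding m_def by (rule not_integrable_integral_eq)
    then have "beta \<alpha> = -1/2" using beta_eq by simp
    then show ?thesis using Rsq by linarith
  next
    case True
    have "m = (\<integral>\<omega>. conductance \<omega> \<partial>tree_space \<alpha>)"
      unfolding m_def \<gamma>_def gamma_law_def by (rule integral_distr[OF mc]) simp
    also have "\<dots> = enn2real (\<integral>\<^sup>+\<omega>. ennreal (conductance \<omega>) \<partial>tree_space \<alpha>)"
      by (rule integral_eq_nn_integral[OF mc]) (use AEc in \<open>auto elim: AE_mp\<close>)
    finally have meq: "m = enn2real (\<integral>\<^sup>+\<omega>. ennreal (conductance \<omega>) \<partial>tree_space \<alpha>)" .
    have m0: "0 \<le> m" unfolding meq by simp
    have "m \<le> enn2real (ennreal R)" unfolding meq R_def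
      by (rule enn2real_mono[OF nnC_bound[OF a]]) simp
    then have mR: "m \<le> R" using R0 by simp
    have m2: "m^2 \<le> R^2" by (rule power_mono[OF mR m0])
    have Fge: "1 \<le> (\<integral>t. s * t / (s + t - 1) \<partial>\<gamma>)" if s: "1 \<le> s" for s
    proof -
      have int: "integrable \<gamma> (\<lambda>t. s * t / (s + t - 1))"
      proof (rule Bochner_Integration.integrable_bound[OF True])
        show "(\<lambda>t. s * t / (s + t - 1)) \<in> borel_measurable \<gamma>"
          unfolding \<gamma>_def gamma_law_def by simp
        show "AE t in \<gamma>. norm (s * t / (s + t - 1)) \<le> norm t"
          using AE1
        proof eventually_elim
          case (elim t)
          have "1 \<le> s * t / (s + t - 1)" "s * t / (s + t - 1) \<le> t" using ratio_bounds[OF s elim] by auto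
          then have q: "0 \<le> s * t / (s + t - 1)" by linarith
          have "norm (s * t / (s + t - 1)) = s * t / (s + t - 1)" by (simp only: real_norm_def abs_of_nonneg[OF q])
          moreover have "norm t = t" using elim by simp
          ultimately show ?case using \<open>s * t / (s + t - 1) \<le> t\<close> by (simp only:)
        qed
      qed
      have "1 = (\<integral>t. (1::real) \<partial>\<gamma>)" using lebesgue_integral_const[of \<gamma> "1::real"] G.prob_space by simp
      also have "\<dots> \<le> (\<integral>t. s * t / (s + t - 1) \<partial>\<gamma>)"
      proof (rule integral_mono_AE[OF _ int])
        show "integrable \<gamma> (\<lambda>t. 1)" by simp
        show "AE t in \<gamma>. 1 \<le> s * t / (s + t - 1)"
          using AE1 by eventually_elim (rule ratio_bounds(1)[OF s])
      qed
      finally show ?thesis .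
    qed
    have D: "D = 0 \<or> 1 \<le> D"
    proof (cases "integrable \<gamma> (\<lambda>s. \<integral>t. s * t / (s + t - 1) \<partial>\<gamma>)")
      case False
      then show ?thesis unfolding D_def using not_integrable_integral_eq by blast
    next
      case True
      have "1 = (\<integral>s. (1::real) \<partial>\<gamma>)" using lebesgue_integral_const[of \<gamma> "1::real"] G.prob_space by simp
      also have "\<dots> \<le> D" unfolding D_def
      proof (rule integral_mono_AE[OF _ True])
        show "integrable \<gamma> (\<lambda>t. 1)" by simp
        show "AE s in \<gamma>. 1 \<le> (\<integral>t. s * t / (s + t - 1) \<partial>\<gamma>)"
          using AE1 by eventually_elim (rule Fge)
      qed
      finally show ?thesis by simp
    qed
    then show ?thesis
    proof
      assume "D = 0"
      then have "beta \<alpha> = -1/2" using beta_eq by simp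
      then show ?thesis using Rsq by linarith
    next
      assume D1: "1 \<le> D"
      have "m^2 / D \<le> m^2" using D1 by (simp add: divide_le_eq mult_le_cancel_left1 mult_right_mono[of 1 D "m^2", simplified])
      then have "beta \<alpha> \<le> (R^2 - 1) / 2" using beta_eq m2 by simp
      also have "\<dots> \<le> R^2"
      proof -
        have gen: "\<And>x::real. 0 \<le> x \<Longrightarrow> (x - 1) / 2 \<le> x" by (simp add: field_simps)
        show ?thesis by (rule gen[OF zero_le_power2])
      qed
      finally show ?thesis unfolding R_def .
    qed
  qed
qed

theorem theorem3:
  shows "\<exists>C::real. \<forall>\<alpha>::real. 1 < \<alpha> \<and> \<alpha> \<le> 2 \<longrightarrow> beta \<alpha> < C"
proof (intro exI allI impI)
  fix \<alpha> :: real assume "1 < \<alpha> \<and> \<alpha> \<le> 2"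
  then show "beta \<alpha> < ((sqrt 2 + 4) * (4 * BS))^2 + 1" using beta_le[of \<alpha>] by fastforce
qed

end
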